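(* Let $k>1$, let $n=2m$ be even, and let $f:\mathbb{F}_2^n\to\mathbb{Z}_{2^k}$. For $\mathbf{u}\in\mathbb{F}_2^n$ let $f_{\mathbf{u}}(\mathbf{x})=f(\mathbf{x})+2^{k-1}(\mathbf{u}\cdot\mathbf{x})\in\mathbb{Z}_{2^k}$ and $b_j^{(\mathbf{u})}=|\{\mathbf{x}\in\mathbb{F}_2^n: f_{\mathbf{u}}(\mathbf{x})=j\}|$ for $0\le j\le 2^k-1$. Then $f$ is gbent if and only if for every $\mathbf{u}\in\mathbb{F}_2^n$ there exists an integer $\rho_{\mathbf{u}}$ with $0\le\rho_{\mathbf{u}}\le 2^{k-1}-1$ such that $b^{(\mathbf{u})}_{2^{k-1}+\rho_{\mathbf{u}}}=b^{(\mathbf{u})}_{\rho_{\mathbf{u}}}\pm 2^m$ and $b^{(\mathbf{u})}_{2^{k-1}+j}=b^{(\mathbf{u})}_j$ for all $0\le j\le 2^{k-1}-1$ with $j\ne\rho_{\mathbf{u}}$.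
   Context: For an integer $q\ge 2$, $\zeta_q=e^{2\pi i/q}$. The generalized Walsh–Hadamard transform of $f:\mathbb{F}_2^n\to\mathbb{Z}_q$ is $\mathcal{H}^{(q)}_f(\mathbf{u})=\sum_{\mathbf{x}\in\mathbb{F}_2^n}\zeta_q^{f(\mathbf{x})}(-1)^{\mathbf{u}\cdot\mathbf{x}}$, with $\mathbf{u}\cdot\mathbf{x}$ the usual dot product over $\mathbb{F}_2$; $f$ is gbent if $|\mathcal{H}^{(q)}_f(\mathbf{u})|=2^{n/2}$ for all $\mathbf{u}$. Here $q=2^k$. *)

theory Defs
  imports "HOL-Analysis.Analysis"
begin

text \<open>Vectors of F_2^n are modelled as functions nat => bool vanishing outside {0..<n}.\<close>
definition bvecs :: "nat \<Rightarrow> (nat \<Rightarrow> bool) set" where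
  "bvecs n = {x. \<forall>i. n \<le> i \<longrightarrow> \<not> x i}"

definition dotp :: "nat \<Rightarrow> (nat \<Rightarrow> bool) \<Rightarrow> (nat \<Rightarrow> bool) \<Rightarrow> nat" where
  "dotp n u x = card {i. i < n \<and> u i \<and> x i} mod 2"

text \<open>Elements of Z_q are represented by integers, read modulo q.\<close>
definition zeta :: "nat \<Rightarrow> int \<Rightarrow> complex" where
  "zeta q a = cis (2 * pi * real_of_int a / real q)"

definition gwht :: "nat \<Rightarrow> nat \<Rightarrow> ((nat \<Rightarrow> bool) \<Rightarrow> int) \<Rightarrow> (nat \<Rightarrow> bool) \<Rightarrow> complex" where
  "gwht q n f u = (\<Sum>x\<in>bvecs n. zeta q (f x) * (-1) ^ dotp n u x)"

definition gbent :: "nat \<Rightarrow> nat \<Rightarrow> ((nat \<Rightarrow> bool) \<Rightarrow> int) \<Rightarrow> bool" where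
  "gbent q n f \<longleftrightarrow> (\<forall>u\<in>bvecs n. cmod (gwht q n f u) = sqrt (2 ^ n))"

definition fshift :: "nat \<Rightarrow> nat \<Rightarrow> ((nat \<Rightarrow> bool) \<Rightarrow> int) \<Rightarrow> (nat \<Rightarrow> bool) \<Rightarrow> (nat \<Rightarrow> bool) \<Rightarrow> int" where
  "fshift k n f u x = (f x + 2 ^ (k - 1) * int (dotp n u x)) mod 2 ^ k"

definition bcount :: "nat \<Rightarrow> nat \<Rightarrow> ((nat \<Rightarrow> bool) \<Rightarrow> int) \<Rightarrow> (nat \<Rightarrow> bool) \<Rightarrow> int \<Rightarrow> int" where
  "bcount k n f u j = int (card {x \<in> bvecs n. fshift k n f u x = j})"

end

theory Submission
  imports Defs "HOL-Computational_Algebra.Polynomial"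
begin


lemma two_pow_poly:
  "\<exists>R::int poly. [:1,1:]^(2^e) = monom 1 (2^e) + 1 + smult 2 R"
proof (induction e)
  case 0 then show ?case by (rule exI[of _ 0]) (simp add: monom_Suc one_pCons)
next
  case (Suc e)
  then obtain R where R: "[:1,1:]^(2^e) = monom (1::int) (2^e) + 1 + smult 2 R" by blast
  have "[:1::int,1:]^(2^Suc e) = ([:1,1:]^(2^e))^2" by (simp add: power_mult[symmetric] mult.commute)
  also have "\<dots> = (monom 1 (2^e) + 1 + smult 2 R)^2" using R by simp
  also have "\<dots> = monom 1 (2^e) * monom 1 (2^e) + 1 + smult 2 (monom 1 (2^e) + smult 2 (R * (monom 1 (2^e) + 1)) + smult 2 (R*R))"
    by (simp add: power2_eq_square algebra_simps numeral_mult_conv_smult[symmetric])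
  also have "monom (1::int) (2^e) * monom 1 (2^e) = monom 1 (2^Suc e)" by (simp add: mult_monom mult_2)
  finally show ?case by blast
qed

lemma eisen:
  fixes g h F :: "int poly"
  assumes "g * h = F" "degree F = N" "\<forall>i<N. even (coeff F i)" "coeff F 0 = 2"
    "odd (coeff F N)" "degree g \<ge> 1" "degree h \<ge> 1"
  shows False
proof -
  have gen: False if gh: "g * h = F" and dg: "degree g \<ge> 1" "degree h \<ge> 1"
    and g0: "odd (coeff g 0)" for g h
  proof -
    have "coeff g 0 * coeff h 0 = 2" using gh assms(4) by (metis coeff_mult_0)
    hence h0: "even (coeff h 0)" using g0 by (metis even_mult_iff even_numeral)
    have nz: "g \<noteq> 0" "h \<noteq> 0" using dg by auto
    have dsum: "degree g + degree h = N" using gh assms(2) nz by (metis degree_mult_eq)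
    have "lead_coeff g * lead_coeff h = coeff F N" using gh assms(2) by (metis lead_coeff_mult)
    hence lh: "odd (coeff h (degree h))" using assms(5) by (metis even_mult_iff)
    define s where "s = (LEAST i. odd (coeff h i))"
    have hs: "odd (coeff h s)" unfolding s_def by (rule LeastI[of _ "degree h"]) (rule lh)
    have sle: "s \<le> degree h" unfolding s_def by (rule Least_le) (rule lh)
    have hlt: "even (coeff h i)" if "i < s" for i using not_less_Least[OF that[unfolded s_def]] by simp
    have s0: "s \<noteq> 0" proof assume "s = 0" with hs h0 show False by simp qed
    have sN: "s < N" using sle dsum dg by linarith
    obtain s' where ss: "s = Suc s'" using s0 by (cases s) auto
    have "coeff F s = (\<Sum>i\<le>s. coeff g i * coeff h (s - i))" using gh by (metis coeff_mult)
    also have "\<dots> = coeff g 0 * coeff h s + (\<Sum>i\<le>s'. coeff g (Suc i) * coeff h (s - Suc i))"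
      unfolding ss sum.atMost_Suc_shift by simp
    finally have eq: "coeff F s = coeff g 0 * coeff h s + (\<Sum>i\<le>s'. coeff g (Suc i) * coeff h (s - Suc i))" .
    have "even (\<Sum>i\<le>s'. coeff g (Suc i) * coeff h (s - Suc i))"
      by (rule dvd_sum) (use hlt ss in auto)
    hence "odd (coeff F s)" using eq g0 hs by simp
    thus False using assms(3) sN by blast
  qed
  have "coeff g 0 * coeff h 0 = 2" using assms(1,4) by (metis coeff_mult_0)
  hence "odd (coeff g 0) \<or> odd (coeff h 0)"
  proof -
    assume p: "coeff g 0 * coeff h 0 = 2"
    show ?thesis
    proof (rule ccontr)
      assume "\<not> ?thesis"
      hence "2 * 2 dvd coeff g 0 * coeff h 0" by (intro mult_dvd_mono) auto
      thus False using p by simp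
    qed
  qed
  thus False
  proof
    assume "odd (coeff g 0)" thus False using gen[OF assms(1)] assms(6,7) by blast
  next
    assume "odd (coeff h 0)" thus False using gen[of h g] assms(1,6,7) by (simp add: mult.commute)
  qed
qed

lemma map_poly_of_int_add: "map_poly (of_int :: int \<Rightarrow> 'a::comm_ring_1) (p + q) = map_poly of_int p + map_poly of_int q"
  by (rule poly_eqI) (simp add: coeff_map_poly)
lemma map_poly_of_int_mult: "map_poly (of_int :: int \<Rightarrow> 'a::comm_ring_1) (p * q) = map_poly of_int p * map_poly of_int q"
  by (rule poly_eqI) (simp add: coeff_map_poly coeff_mult)
lemma map_poly_of_int_smult: "map_poly (of_int :: int \<Rightarrow> 'a::comm_ring_1) (smult c p) = smult (of_int c) (map_poly of_int p)"
  by (rule poly_eqI) (simp add: coeff_map_poly)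

locale cyc = fixes e :: nat assumes e1: "1 \<le> e"
begin
definition N :: nat where "N = 2^e"
definition z :: complex where "z = cis (pi / real N)"
lemma N_even: "even N" using e1 unfolding N_def by (cases e) auto
lemma N_ge2: "N \<ge> 2" using e1 unfolding N_def
  by (metis power_increasing power_one_right zero_less_numeral one_le_numeral)
lemma zN: "z ^ N = -1"
  using N_ge2 by (simp add: z_def Complex.DeMoivre)
lemma z_ne1: "z \<noteq> 1" using zN N_ge2 by auto
lemma z_nz: "z \<noteq> 0" proof assume "z = 0" hence "z ^ N = 0" using N_ge2 by simp thus False using zN by simp qed
definition E :: "int poly \<Rightarrow> complex" where "E p = poly (map_poly of_int p) z"
lemma E_add: "E (p + q) = E p + E q" by (simp add: E_def map_poly_of_int_add)
lemma E_mult: "E (p * q) = E p * E q" by (simp add: E_def map_poly_of_int_mult)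
lemma E_smult: "E (smult c p) = of_int c * E p" by (simp add: E_def map_poly_of_int_smult)
lemma E_diff: "E (p - q) = E p - E q" using E_add[of "p - q" q] by simp
lemma E_monom: "E (monom c i) = of_int c * z ^ i"
  by (simp add: E_def poly_monom map_poly_monom)
lemma E_const: "E [:c:] = of_int c" by (cases "c = 0") (simp_all add: E_def map_poly_pCons)
definition M :: "int poly" where "M = monom 1 N + 1"
lemma E_M: "E M = 0" by (simp add: M_def E_add E_monom zN one_pCons E_const[of 1, simplified])
lemma degree_M: "degree M = N" using N_ge2 unfolding M_def
  by (simp add: degree_add_eq_left degree_monom_eq one_pCons)

lemma pcompose_power: "pcompose (p ^ n) r = (pcompose p r) ^ n"
  by (induction n) (simp_all add: pcompose_mult pcompose_1)

lemma F_shape: "\<exists>R1. pcompose M [:-1,1:] = monom 1 N - smult 2 R1"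
proof -
  obtain R where R: "[:1,1:]^(2^e) = monom (1::int) (2^e) + 1 + smult 2 R" using two_pow_poly by blast
  hence "M = [:1,1:]^N - smult 2 R" unfolding M_def N_def by simp
  hence "pcompose M [:-1,1:] = (pcompose [:1,1:] [:-1,1:])^N - smult 2 (pcompose R [:-1,1:])"
    by (simp add: pcompose_diff pcompose_smult pcompose_power)
  also have "pcompose [:1::int,1:] [:-1,1:] = [:0,1:]" by (simp add: pcompose_pCons one_pCons)
  finally show ?thesis by (auto simp: monom_altdef)
qed

lemma content_M: "content M = 1"
proof -
  have "coeff M 0 = 1" using N_ge2 by (simp add: M_def)
  hence "content M dvd 1" by (metis content_dvd_coeff)
  hence "normalize (content M) = 1" by (rule is_unit_normalize)
  thus ?thesis by (metis normalize_content)
qed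

theorem indep: "P \<noteq> 0 \<Longrightarrow> degree P < N \<Longrightarrow> E P \<noteq> 0"
proof (induction "degree P" arbitrary: P rule: less_induct)
  case less
  show ?case
  proof
    assume EP: "E P = 0"
    have dP1: "degree P \<ge> 1"
    proof (rule ccontr)
      assume "\<not> ?thesis"
      hence "P = [:coeff P 0:]" by (metis degree_0_id less_one not_le)
      moreover have "coeff P 0 \<noteq> 0" using less.prems(1) calculation by (metis pCons_0_0)
      ultimately show False using EP E_const by (metis of_int_eq_0_iff)
    qed
    obtain Q R where qr: "pseudo_divmod M P = (Q, R)" by (metis surj_pair)
    define c where "c = lead_coeff P ^ (Suc (degree M) - degree P)"
    have eq: "smult c M = P * Q + R" and dR: "R = 0 \<or> degree R < degree P"
      using pseudo_divmod[OF less.prems(1) qr] unfolding c_def by auto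
    have "E R = 0" using arg_cong[OF eq, of E] by (simp add: E_smult E_M E_add E_mult EP)
    hence R0: "R = 0" using dR less.hyps less.prems(2) by fastforce
    have c0: "c \<noteq> 0" unfolding c_def using less.prems(1) by simp
    define P' where "P' = primitive_part P"
    define Q' where "Q' = primitive_part Q"
    have PQ: "P * Q = smult (content P * content Q) (P' * Q')" unfolding P'_def Q'_def
      by (metis content_times_primitive_part mult_smult_left mult_smult_right smult_smult)
    have "content (smult c M) = content (P * Q)" using eq R0 by simp
    hence cc: "abs c = content P * content Q" by (simp add: content_mult content_M)
    have "smult (abs c) (smult (sgn c) M) = smult c M" by (simp add: abs_mult_sgn)
    also have "\<dots> = smult (abs c) (P' * Q')" using eq R0 PQ cc by simp
    finally have "smult (abs c) (smult (sgn c) M) = smult (abs c) (P' * Q')" .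
    hence "smult (sgn c) M = P' * Q'" using c0 by (metis smult_cancel abs_0_eq)
    hence sm: "smult (sgn c) M = P' * Q'" .
    have ss: "sgn c * sgn c = 1" using c0 by (simp add: sgn_if)
    have "M = smult (sgn c) (smult (sgn c) M)" by (simp only: smult_smult ss smult_1_left)
    hence fac: "M = P' * smult (sgn c) Q'" using sm by (simp add: mult_smult_right)
    have M0: "M \<noteq> 0" using degree_M N_ge2 by auto
    have nzQ: "smult (sgn c) Q' \<noteq> 0" using fac M0 by (metis mult_zero_right)
    have nzP: "P' \<noteq> 0" using fac M0 by (metis mult_zero_left)
    have dsum: "degree P' + degree (smult (sgn c) Q') = N"
      using fac degree_M nzP nzQ by (metis degree_mult_eq)
    have dP': "degree P' = degree P" unfolding P'_def by simp
    obtain R1 where R1: "pcompose M [:-1,1:] = monom 1 N - smult 2 R1" using F_shape by blast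
    define F where "F = pcompose M [:-1,1:]"
    show False
    proof (rule eisen[of "pcompose P' [:-1,1:]" "pcompose (smult (sgn c) Q') [:-1,1:]" F N])
      show "pcompose P' [:-1,1:] * pcompose (smult (sgn c) Q') [:-1,1:] = F"
        unfolding F_def using arg_cong[OF fac, of "\<lambda>p. pcompose p [:-1,1:]"] by (simp only: pcompose_mult)
      show "degree F = N" unfolding F_def by (simp add: degree_pcompose degree_M)
      show "\<forall>i<N. even (coeff F i)" unfolding F_def R1 by (auto simp: coeff_monom)
      show "odd (coeff F N)" unfolding F_def R1 by (auto simp: coeff_monom)
      have "coeff F 0 = poly F 0" by (simp add: poly_0_coeff_0)
      also have "\<dots> = poly M (-1)" unfolding F_def by (simp add: poly_pcompose)
      also have "\<dots> = 2" using N_even by (simp add: M_def poly_monom)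
      finally show "coeff F 0 = 2" .
      show "degree (pcompose P' [:-1,1:]) \<ge> 1" using dP1 dP' by (simp add: degree_pcompose)
      show "degree (pcompose (smult (sgn c) Q') [:-1,1:]) \<ge> 1"
        using dsum dP' less.prems(2) by (simp add: degree_pcompose)
    qed
  qed
qed

end



context cyc begin

definition S :: "(nat \<Rightarrow> int) \<Rightarrow> complex" where "S a = (\<Sum>j<N. of_int (a j) * z ^ j)"
definition inR :: "complex \<Rightarrow> bool" where "inR x \<longleftrightarrow> (\<exists>a. x = S a)"

lemma z2N: "z ^ (2*N) = 1" using zN by (simp add: power_mult mult.commute[of 2] power_mult[symmetric])

lemma E_0: "E 0 = 0" by (simp add: E_def)
lemma E_sum: "E (sum f A) = (\<Sum>i\<in>A. E (f i))"
  by (induction A rule: infinite_finite_induct) (auto simp: E_add E_0)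

lemma S_E: "S a = E (\<Sum>j<N. monom (a j) j)"
  by (simp add: S_def E_sum E_monom)

lemma uniq: assumes "S a = S b" "j < N" shows "a j = b j"
proof -
  define P where "P = (\<Sum>i<N. monom (a i - b i) i)"
  have cP: "coeff P i = (if i < N then a i - b i else 0)" for i
    unfolding P_def by (simp add: coeff_sum coeff_monom)
  have "S (\<lambda>i. a i - b i) = S a - S b" by (simp add: S_def sum_subtractf algebra_simps)
  hence EP: "E P = 0" using assms(1) S_E[of "\<lambda>i. a i - b i"] unfolding P_def by simp
  have "P = 0"
  proof (rule ccontr)
    assume nz: "P \<noteq> 0"
    have "degree P < N"
    proof (rule ccontr)
      assume "\<not> degree P < N"
      hence "coeff P (degree P) = 0" using cP by simp
      thus False using nz by simp
    qed
    thus False using indep[OF nz] EP by simp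
  qed
  hence "coeff P j = 0" by simp
  thus ?thesis using cP assms(2) by simp
qed

lemma S_add: "S a + S b = S (\<lambda>j. a j + b j)" by (simp add: S_def sum.distrib algebra_simps)
lemma S_scale: "of_int c * S a = S (\<lambda>j. c * a j)" by (simp add: S_def sum_distrib_left algebra_simps)
lemma S_delta: "j < N \<Longrightarrow> S (\<lambda>i. if i = j then c else 0) = of_int c * z ^ j"
proof -
  assume j: "j < N"
  have fe: "(\<lambda>i. of_int (if i = j then c else 0) * z ^ i) = (\<lambda>i. if i = j then of_int c * z ^ j else (0::complex))" by auto
  have "S (\<lambda>i. if i = j then c else 0) = (\<Sum>i<N. if i = j then of_int c * z ^ j else (0::complex))"
    unfolding S_def fe by (rule refl)
  also have "\<dots> = of_int c * z ^ j" using j by (subst sum.delta) auto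
  finally show ?thesis .
qed

lemma inR_add: "inR x \<Longrightarrow> inR y \<Longrightarrow> inR (x + y)" unfolding inR_def using S_add by metis
lemma inR_scale: "inR x \<Longrightarrow> inR (of_int c * x)" unfolding inR_def using S_scale by metis
lemma inR_neg: "inR x \<Longrightarrow> inR (- x)" using inR_scale[of x "-1"] by simp
lemma inR_diff: "inR x \<Longrightarrow> inR y \<Longrightarrow> inR (x - y)" using inR_add inR_neg by fastforce
lemma inR_0: "inR 0" unfolding inR_def by (rule exI[of _ "\<lambda>_. 0"]) (simp add: S_def)
lemma inR_sum: "(\<And>i. i \<in> A \<Longrightarrow> inR (f i)) \<Longrightarrow> inR (sum f A)"
  by (induction A rule: infinite_finite_induct) (auto simp: inR_0 inR_add)

lemma inR_zpow: "inR (z ^ n)"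
proof -
  define r where "r = n mod (2*N)"
  have "z ^ n = z ^ r"
  proof -
    have "n = (2*N) * (n div (2*N)) + r" unfolding r_def by simp
    hence "z ^ n = (z^(2*N))^(n div (2*N)) * z ^ r" by (metis power_add power_mult)
    thus ?thesis using z2N by simp
  qed
  moreover have "inR (z ^ r)"
  proof (cases "r < N")
    case True thus ?thesis unfolding inR_def using S_delta[OF True, of 1] by (metis mult_1 of_int_1)
  next
    case False
    have rl: "r < 2*N" unfolding r_def using N_ge2 by simp
    have "z ^ r = z ^ N * z ^ (r - N)" using False by (metis le_add_diff_inverse not_less power_add)
    hence "z ^ r = of_int (-1) * z ^ (r - N)" using zN by simp
    thus ?thesis unfolding inR_def using S_delta[of "r - N" "-1"] rl False by (metis less_diff_conv2 not_less mult_2)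
  qed
  ultimately show ?thesis by simp
qed

lemma inR_mult: assumes "inR x" "inR y" shows "inR (x * y)"
proof -
  obtain a b where x: "x = S a" and y: "y = S b" using assms unfolding inR_def by blast
  have "x * y = (\<Sum>i<N. \<Sum>j<N. of_int (a i * b j) * z ^ (i + j))"
    unfolding x y S_def sum_product by (simp add: power_add algebra_simps)
  also have "inR \<dots>" by (intro inR_sum inR_scale inR_zpow)
  finally show ?thesis .
qed

lemma inR_int: "inR (of_int c)" using inR_scale[OF inR_zpow[of 0], of c] by simp
lemma inR_1: "inR 1" using inR_int[of 1] by simp
lemma inR_pow: "inR x \<Longrightarrow> inR (x ^ n)" by (induction n) (auto simp: inR_1 inR_mult)

lemma norm_z: "norm z = 1" by (simp add: z_def)
lemma cnj_z_mult: "cnj z * z = 1"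
  using complex_norm_square[of z] norm_z by (simp add: mult.commute)
lemma cnj_z: "cnj z = z ^ (2*N - 1)"
proof -
  have "z * z ^ (2*N - 1) = 1" using z2N N_ge2 by (metis power_Suc Suc_diff_1 mult_pos_pos zero_less_numeral not_less_eq_eq le_zero_eq not_numeral_le_zero nat_0_less_mult_iff less_le_trans zero_less_two)
  hence "cnj z * (z * z ^ (2*N - 1)) = cnj z" by simp
  thus ?thesis using cnj_z_mult by (simp add: mult.assoc[symmetric])
qed
lemma inR_cnj: assumes "inR x" shows "inR (cnj x)"
proof -
  obtain a where x: "x = S a" using assms unfolding inR_def by blast
  have "cnj x = (\<Sum>j<N. of_int (a j) * (z ^ ((2*N - 1) * j)))"
    unfolding x S_def by (simp add: cnj_z power_mult)
  also have "inR \<dots>" by (intro inR_sum inR_scale inR_zpow)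
  finally show ?thesis .
qed

lemma inR_eval: assumes "inR w" shows "inR (poly (map_poly of_int p) w)"
proof -
  have "poly (map_poly of_int p) w = (\<Sum>i\<le>degree (map_poly (of_int :: int \<Rightarrow> complex) p). coeff (map_poly of_int p) i * w ^ i)"
    by (simp add: poly_altdef)
  also have "\<dots> = (\<Sum>i\<le>degree (map_poly (of_int :: int \<Rightarrow> complex) p). of_int (coeff p i) * w ^ i)"
    by (simp add: coeff_map_poly)
  also have "inR \<dots>" by (intro inR_sum inR_scale inR_pow assms)
  finally show ?thesis .
qed

end



lemma map_poly_of_int_power: "map_poly (of_int :: int \<Rightarrow> 'a::comm_ring_1) (p ^ n) = (map_poly of_int p) ^ n"
  by (induction n) (simp_all add: map_poly_of_int_mult)

context cyc begin

definition rdvd :: "complex \<Rightarrow> complex \<Rightarrow> bool" where "rdvd p x \<longleftrightarrow> (\<exists>y. inR y \<and> x = p * y)"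
definition pp :: complex where "pp = 1 - z"

lemma inR_pp: "inR pp" unfolding pp_def by (intro inR_diff inR_1) (metis power_one_right inR_zpow)
lemma inR_z: "inR z" by (metis power_one_right inR_zpow)
lemma pp_nz: "pp \<noteq> 0" unfolding pp_def using z_ne1 by simp

lemma rdvd_add: "rdvd p x \<Longrightarrow> rdvd p y \<Longrightarrow> rdvd p (x + y)"
  unfolding rdvd_def by (metis inR_add distrib_left)
lemma rdvd_scale: "rdvd p x \<Longrightarrow> rdvd p (of_int c * x)"
  unfolding rdvd_def by (metis inR_scale mult.left_commute)
lemma rdvd_multR: "rdvd p x \<Longrightarrow> inR w \<Longrightarrow> rdvd p (x * w)"
  unfolding rdvd_def by (metis inR_mult mult.assoc)
lemma rdvd_mult2: "rdvd p x \<Longrightarrow> rdvd q y \<Longrightarrow> rdvd (p * q) (x * y)"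
  unfolding rdvd_def by (metis inR_mult mult.assoc mult.left_commute)
lemma rdvd_trans: "rdvd p q \<Longrightarrow> rdvd q x \<Longrightarrow> rdvd p x"
  unfolding rdvd_def by (metis inR_mult mult.assoc)
lemma rdvd_0: "rdvd p 0" unfolding rdvd_def using inR_0 by force
lemma rdvd_sum: "(\<And>i. i \<in> A \<Longrightarrow> rdvd p (f i)) \<Longrightarrow> rdvd p (sum f A)"
  by (induction A rule: infinite_finite_induct) (auto simp: rdvd_0 rdvd_add)
lemma rdvd_refl: "rdvd p p" unfolding rdvd_def using inR_1 by force
lemma rdvd_diff: "rdvd p x \<Longrightarrow> rdvd p y \<Longrightarrow> rdvd p (x - y)"
  using rdvd_add[of p x "of_int (-1) * y"] rdvd_scale[of p y "-1"] by simp
lemma rdvd_pow: "rdvd p x \<Longrightarrow> rdvd (p ^ n) (x ^ n)"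
  unfolding rdvd_def by (metis inR_pow power_mult_distrib)
lemma rdvd_pow_le: assumes "inR p" "m \<le> n" shows "rdvd (p ^ m) (p ^ n)"
proof -
  have "p ^ n = p ^ m * p ^ (n - m)" using assms(2) by (simp add: power_add[symmetric])
  thus ?thesis unfolding rdvd_def using inR_pow[OF assms(1)] by blast
qed

lemma pp_dvd_1m: "rdvd pp (1 - z ^ r)"
  unfolding rdvd_def pp_def using one_diff_power_eq[of z r]
  by (metis inR_sum inR_zpow)

lemma ppow_dvd_gen: "j \<le> e \<Longrightarrow> odd r \<Longrightarrow> rdvd (pp ^ (2^j)) (1 - z ^ (2^j * r))"
proof (induction j arbitrary: r)
  case 0 thus ?case using pp_dvd_1m by simp
next
  case (Suc j)
  have ej: "odd (r + 2^(e - j))"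
    using Suc.prems by (simp add: Suc_le_eq)
  have NN: "2^j * (r + 2^(e-j)) = 2^j * r + N"
    unfolding N_def using Suc.prems(1) by (simp add: algebra_simps power_add[symmetric])
  have "2^Suc j * r = 2^j*r + 2^j*r" by simp
  hence "1 - z ^ (2^Suc j * r) = 1 - z ^ (2^j*r) * z ^ (2^j*r)" by (simp only: power_add)
  hence "1 - z ^ (2^Suc j * r) = (1 - z ^ (2^j * r)) * (1 - z ^ (2^j * (r + 2^(e-j))))"
    unfolding NN by (simp add: power_add zN algebra_simps)
  moreover have "rdvd (pp ^ (2^j) * pp ^ (2^j)) \<dots>"
    using Suc.IH[of r] Suc.IH[OF _ ej] Suc.prems by (intro rdvd_mult2) auto
  ultimately show ?case by (simp add: power_add[symmetric] mult_2)
qed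

lemma ppN_dvd_2: "rdvd (pp ^ N) 2"
  using ppow_dvd_gen[of e 1] zN unfolding N_def by simp

lemma two_dvd_ppN: "\<exists>w. inR w \<and> pp ^ N = 2 * w"
proof -
  obtain R where R: "[:1,1:]^(2^e) = monom (1::int) (2^e) + 1 + smult 2 R" using two_pow_poly by blast
  have "poly (map_poly (of_int :: int \<Rightarrow> complex) ([:1,1:]^N)) (-z) = poly (map_poly of_int (monom (1::int) N + 1 + smult 2 R)) (-z)"
    using R unfolding N_def by simp
  hence "(1 - z) ^ N = (-z) ^ N + 1 + 2 * poly (map_poly of_int R) (-z)"
    by (simp add: map_poly_of_int_power map_poly_of_int_add map_poly_of_int_smult map_poly_monom poly_monom map_poly_pCons)
  also have "(-z) ^ N = z ^ N" using N_even by simp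
  finally have "pp ^ N = 2 * poly (map_poly of_int R) (-z)" using zN pp_def by simp
  thus ?thesis using inR_eval[OF inR_neg[OF inR_z]] by blast
qed

lemma pp_dvd_2: "rdvd pp 2"
proof -
  have "rdvd pp (pp ^ N)" using rdvd_pow_le[OF inR_pp, of 1 N] N_ge2 by simp
  thus ?thesis using ppN_dvd_2 rdvd_trans by blast
qed

lemma not_pp_dvd_1: "\<not> rdvd pp 1"
proof
  assume "rdvd pp 1"
  hence "rdvd (pp ^ N) 1" using rdvd_pow[of pp 1 N] by simp
  then obtain y where y: "inR y" "1 = pp ^ N * y" unfolding rdvd_def by auto
  obtain w where w: "inR w" "pp ^ N = 2 * w" using two_dvd_ppN by blast
  have "inR (w * y)" using y w inR_mult by blast
  then obtain b where b: "w * y = S b" unfolding inR_def by blast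
  have "S (\<lambda>j. 2 * b j) = S (\<lambda>i. if i = 0 then 1 else 0)"
    using S_scale[of 2 b] S_delta[of 0 1] N_ge2 y w b by (simp add: mult.assoc)
  note u = uniq[OF this, of 0]
  hence "2 * b 0 = 1" using N_ge2 by simp
  thus False by presburger
qed

lemma pp_dvd_int: "rdvd pp (of_int c) \<longleftrightarrow> even c"
proof
  assume "even c"
  then obtain t where "c = 2 * t" by blast
  thus "rdvd pp (of_int c)" using rdvd_scale[OF pp_dvd_2, of t] by (simp add: mult.commute)
next
  assume d: "rdvd pp (of_int c)"
  show "even c"
  proof (rule ccontr)
    assume "odd c"
    then obtain t where t: "c = 2 * t + 1" by (metis oddE)
    have "rdvd pp (of_int c - of_int t * 2)" using d rdvd_scale[OF pp_dvd_2, of t] by (intro rdvd_diff)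
    hence "rdvd pp 1" using t by simp
    thus False using not_pp_dvd_1 by simp
  qed
qed

lemma cong_int: assumes "inR x" shows "\<exists>c. rdvd pp (x - of_int c)"
proof -
  obtain a where x: "x = S a" using assms unfolding inR_def by blast
  have "x - of_int (\<Sum>j<N. a j) = - (\<Sum>j<N. of_int (a j) * (1 - z ^ j))"
    unfolding x S_def by (simp add: algebra_simps sum_subtractf sum_distrib_left)
  also have "rdvd pp \<dots>"
    using rdvd_scale[OF rdvd_sum[of "{..<N}" pp "\<lambda>j. of_int (a j) * (1 - z ^ j)"], of "-1"]
    by (simp add: rdvd_scale pp_dvd_1m)
  finally show ?thesis by blast
qed

lemma pp_prime: assumes "inR x" "inR y" "rdvd pp (x * y)" shows "rdvd pp x \<or> rdvd pp y"
proof -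
  obtain c d where c: "rdvd pp (x - of_int c)" and d: "rdvd pp (y - of_int d)"
    using cong_int assms by blast
  have "x * y - of_int (c * d) = (x - of_int c) * y + of_int c * (y - of_int d)"
    by (simp add: algebra_simps)
  hence "rdvd pp (x * y - of_int (c * d))" using c d assms(2) by (metis rdvd_multR rdvd_scale rdvd_add)
  hence "rdvd pp (of_int (c * d))" using assms(3) rdvd_diff by fastforce
  hence "even (c * d)" using pp_dvd_int[of "c * d"] by simp
  hence "even c \<or> even d" by simp
  thus ?thesis
  proof
    assume "even c" hence "rdvd pp (of_int c)" using pp_dvd_int by simp
    hence "rdvd pp (x - of_int c + of_int c)" using c rdvd_add by blast
    thus ?thesis by simp
  next
    assume "even d" hence "rdvd pp (of_int d)" using pp_dvd_int by simp
    hence "rdvd pp (y - of_int d + of_int d)" using d rdvd_add by blast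
    thus ?thesis by simp
  qed
qed

lemma cnj_pp: "cnj pp = - cnj z * pp"
  unfolding pp_def using cnj_z_mult by (simp add: algebra_simps)

lemma pp_dvd_cnj: assumes "inR y" "rdvd pp (cnj y)" shows "rdvd pp y"
proof -
  obtain w where w: "inR w" "cnj y = pp * w" using assms unfolding rdvd_def by blast
  hence "y = cnj pp * cnj w" by (metis complex_cnj_cnj complex_cnj_mult)
  hence "y = pp * (- cnj z * cnj w)" using cnj_pp by simp
  moreover have "inR (- cnj z * cnj w)" using w inR_cnj inR_z inR_neg inR_mult by blast
  ultimately show ?thesis unfolding rdvd_def by blast
qed

end



context cyc begin

lemma descent1:
  assumes x: "inR x" and xx: "x * cnj x = 4 ^ m" and m: "m \<ge> 1"
  shows "\<exists>y. inR y \<and> x = 2 * y"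
proof (rule ccontr)
  assume nd: "\<not> ?thesis"
  obtain w where w: "inR w" "pp ^ N = 2 * w" using two_dvd_ppN by blast
  have bound: "v < N" if "rdvd (pp ^ v) x" for v
  proof (rule ccontr)
    assume "\<not> v < N"
    hence "rdvd (pp ^ N) x" using rdvd_pow_le[OF inR_pp, of N v] that rdvd_trans by auto
    then obtain t where "inR t" "x = pp ^ N * t" unfolding rdvd_def by blast
    hence "x = 2 * (w * t)" "inR (w * t)" using w inR_mult by auto
    thus False using nd by blast
  qed
  define V where "V = {v. rdvd (pp ^ v) x}"
  have finV: "finite V" using bound unfolding V_def by (metis finite_nat_set_iff_bounded mem_Collect_eq)
  have "0 \<in> V" unfolding V_def using x by (simp add: rdvd_def)
  define v where "v = Max V"
  have vV: "v \<in> V" unfolding v_def using finV \<open>0 \<in> V\<close> by (metis Max_in empty_iff)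
  have vmax: "Suc v \<notin> V" unfolding v_def using finV by (metis Max_ge Suc_n_not_le_n)
  obtain y where y: "inR y" "x = pp ^ v * y" using vV unfolding V_def rdvd_def by blast
  have ny: "\<not> rdvd pp y"
  proof
    assume "rdvd pp y"
    then obtain t where "inR t" "y = pp * t" unfolding rdvd_def by blast
    hence "rdvd (pp ^ Suc v) x" using y unfolding rdvd_def by (metis mult.assoc power_Suc2)
    thus False using vmax unfolding V_def by simp
  qed
  have vN: "v < N" using vV bound unfolding V_def by simp
  have "rdvd (pp ^ N * pp ^ N) (2 * 2)" using ppN_dvd_2 rdvd_mult2 by blast
  moreover have "pp ^ N * pp ^ N = pp ^ (2*N)" by (simp only: mult_2 power_add)
  ultimately have h4: "rdvd (pp ^ (2*N)) 4" by simp
  have i4: "inR (4 ^ (m - 1))" using inR_pow[OF inR_int[of 4]] by simp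
  have "(4::complex) ^ m = 4 * 4 ^ (m - 1)" using m by (metis Suc_diff_1 less_le_trans power_Suc zero_less_one)
  hence "rdvd (pp ^ (2*N)) (4 ^ m)" using rdvd_multR[OF h4 i4] by simp
  then obtain t where t: "inR t" "4 ^ m = pp ^ (2*N) * t" unfolding rdvd_def by blast
  have cp: "cnj pp = (- cnj z) * pp" using cnj_pp by simp
  have "cnj x = (cnj pp)^v * cnj y" using y by simp
  hence "cnj x = (- cnj z) ^ v * pp ^ v * cnj y" unfolding cp by (simp only: power_mult_distrib)
  hence cx: "cnj x = (- cnj z) ^ v * pp ^ v * cnj y" .
  have "x * cnj x = (pp ^ v * y) * ((- cnj z) ^ v * pp ^ v * cnj y)" using y(2) cx by (simp only:)
  also have "\<dots> = ((- cnj z) ^ v * y * cnj y) * (pp ^ v * pp ^ v)" by (simp only: mult_ac)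
  also have "pp ^ v * pp ^ v = pp ^ (2 * v)" by (simp only: mult_2 power_add)
  finally have x1: "x * cnj x = ((- cnj z) ^ v * y * cnj y) * pp ^ (2 * v)" .
  have "pp ^ (2*N) = pp ^ (2 * v) * pp ^ (2*N - 2 * v)" using vN by (simp only: power_add[symmetric]) simp
  hence "pp ^ (2 * v) * ((- cnj z) ^ v * y * cnj y) = pp ^ (2 * v) * (pp ^ (2*N - 2 * v) * t)"
    using xx t x1 by (simp add: ac_simps)
  hence eq: "(- cnj z) ^ v * y * cnj y = pp ^ (2*N - 2 * v) * t" using pp_nz by simp
  have "(-z) ^ v * (- cnj z) ^ v = 1" using cnj_z_mult by (simp add: power_mult_distrib[symmetric] mult.commute)
  hence "y * cnj y = (-z) ^ v * (pp ^ (2*N - 2 * v) * t)" using eq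
    by (metis (no_types, lifting) mult.assoc mult_1)
  also have "\<dots> = pp * ((-z) ^ v * (pp ^ (2*N - 2 * v - 1) * t))"
    using vN by (simp add: algebra_simps power_Suc[symmetric] Suc_diff_Suc)
  finally have "rdvd pp (y * cnj y)" unfolding rdvd_def
    using t inR_mult inR_pow inR_neg inR_z inR_pp by (metis)
  hence "rdvd pp y \<or> rdvd pp (cnj y)" using pp_prime y inR_cnj by blast
  thus False using ny pp_dvd_cnj y by blast
qed

lemma descent:
  "inR x \<Longrightarrow> x * cnj x = 4 ^ m \<Longrightarrow> \<exists>y. inR y \<and> x = 2 ^ m * y \<and> y * cnj y = 1"
proof (induction m arbitrary: x)
  case 0 thus ?case by auto
next
  case (Suc m)
  obtain y where y: "inR y" "x = 2 * y" using descent1[OF Suc.prems] by auto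
  have "4 * (y * cnj y) = 4 * 4 ^ m" using Suc.prems(2) y by (simp add: algebra_simps)
  hence "y * cnj y = 4 ^ m" by simp
  then obtain u where "inR u" "y = 2 ^ m * u" "u * cnj u = 1" using Suc.IH y by blast
  thus ?case using y by auto
qed

definition inR0 :: "complex \<Rightarrow> bool" where "inR0 x \<longleftrightarrow> (\<exists>c. x = (\<Sum>d\<in>{1..<N}. of_int (c d) * z ^ d))"
lemma inR0_add: "inR0 x \<Longrightarrow> inR0 y \<Longrightarrow> inR0 (x + y)"
proof -
  assume "inR0 x" "inR0 y"
  then obtain c1 c2 where "x = (\<Sum>d\<in>{1..<N}. of_int (c1 d) * z ^ d)" "y = (\<Sum>d\<in>{1..<N}. of_int (c2 d) * z ^ d)"
    unfolding inR0_def by blast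
  thus ?thesis unfolding inR0_def
    by (intro exI[of _ "\<lambda>d. c1 d + c2 d"]) (simp add: sum.distrib algebra_simps)
qed
lemma inR0_0: "inR0 0" unfolding inR0_def by (rule exI[of _ "\<lambda>_. 0"]) simp
lemma inR0_sum: "(\<And>i. i \<in> A \<Longrightarrow> inR0 (f i)) \<Longrightarrow> inR0 (sum f A)"
  by (induction A rule: infinite_finite_induct) (auto simp: inR0_0 inR0_add)
lemma inR0_scale: "inR0 x \<Longrightarrow> inR0 (of_int c * x)"
proof -
  assume "inR0 x"
  then obtain c' where "x = (\<Sum>d\<in>{1..<N}. of_int (c' d) * z ^ d)" unfolding inR0_def by blast
  thus ?thesis unfolding inR0_def
    by (intro exI[of _ "\<lambda>d. c * c' d"]) (simp add: sum_distrib_left algebra_simps)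
qed
lemma inR0_delta: "1 \<le> d \<Longrightarrow> d < N \<Longrightarrow> inR0 (of_int c * z ^ d)"
proof -
  assume d: "1 \<le> d" "d < N"
  have fe: "(\<lambda>i. of_int (if i = d then c else 0) * z ^ i) = (\<lambda>i. if i = d then of_int c * z ^ d else (0::complex))" by auto
  have "(\<Sum>i\<in>{1..<N}. of_int (if i = d then c else 0) * z ^ i) = (\<Sum>i\<in>{1..<N}. if i = d then of_int c * z ^ d else (0::complex))"
    unfolding fe by (rule refl)
  also have "\<dots> = of_int c * z ^ d" using d by (subst sum.delta) auto
  finally show ?thesis unfolding inR0_def by metis
qed

lemma cnj_zpow_mult: "cnj z ^ j * z ^ j = 1" using cnj_z_mult by (simp add: power_mult_distrib[symmetric])

lemma offdiag: assumes "i < N" "j < N" "i \<noteq> j" shows "inR0 (of_int c * (z ^ i * cnj z ^ j))"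
proof (cases "j < i")
  case True
  have "z ^ i = z ^ (i - j) * z ^ j" using True by (simp add: power_add[symmetric])
  hence "z ^ i * cnj z ^ j = z ^ (i - j) * (cnj z ^ j * z ^ j)" by (simp only: mult_ac)
  hence "z ^ i * cnj z ^ j = z ^ (i - j)" using cnj_zpow_mult by simp
  thus ?thesis using inR0_delta[of "i - j" c] True assms by simp
next
  case False
  hence ij: "i < j" using assms by simp
  define d where "d = j - i"
  have d: "1 \<le> d" "d < N" using ij assms unfolding d_def by auto
  have "cnj z ^ j = cnj z ^ d * cnj z ^ i" using ij unfolding d_def by (simp add: power_add[symmetric])
  hence "z ^ i * cnj z ^ j = cnj z ^ d * (cnj z ^ i * z ^ i)" by (simp only: mult_ac)
  hence e1: "z ^ i * cnj z ^ j = cnj z ^ d" using cnj_zpow_mult by simp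
  have "z ^ (2*N - d) * z ^ d = z ^ (2*N)" using d by (simp add: power_add[symmetric])
  hence "z ^ (2*N - d) * z ^ d = cnj z ^ d * z ^ d" using z2N cnj_zpow_mult by simp
  hence e2: "cnj z ^ d = z ^ (2*N - d)" using z_nz by simp
  have "2*N - d = N + (N - d)" using d by simp
  hence "z ^ (2*N - d) = z ^ N * z ^ (N - d)" by (simp only: power_add)
  hence "z ^ i * cnj z ^ j = of_int (-1) * z ^ (N - d)" using e1 e2 zN by simp
  thus ?thesis using inR0_scale[OF inR0_delta[of "N - d" "-1"], of c] d
    by (simp add: mult.assoc)
qed

lemma parseval1: assumes "y = S b" "y * cnj y = 1" shows "(\<Sum>j<N. (b j)^2) = 1"
proof -
  have "y * cnj y = (\<Sum>i<N. \<Sum>j<N. of_int (b i * b j) * (z ^ i * cnj z ^ j))"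
  proof -
    have cS: "cnj (S b) = (\<Sum>j<N. of_int (b j) * cnj z ^ j)" by (simp add: S_def)
    show ?thesis unfolding assms(1) cS unfolding S_def sum_product
      by (intro sum.cong refl) (simp add: algebra_simps)
  qed
  also have "\<dots> = (\<Sum>i<N. of_int (b i * b i) * (z ^ i * cnj z ^ i) +
      (\<Sum>j\<in>{..<N} - {i}. of_int (b i * b j) * (z ^ i * cnj z ^ j)))"
    by (intro sum.cong refl) (simp add: sum.remove)
  also have "\<dots> = of_int (\<Sum>i<N. (b i)^2) + (\<Sum>i<N. \<Sum>j\<in>{..<N} - {i}. of_int (b i * b j) * (z ^ i * cnj z ^ j))"
    by (simp add: sum.distrib cnj_zpow_mult mult.commute[of "z ^ _"] power2_eq_square)
  finally have eq: "y * cnj y = of_int (\<Sum>i<N. (b i)^2) + (\<Sum>i<N. \<Sum>j\<in>{..<N} - {i}. of_int (b i * b j) * (z ^ i * cnj z ^ j))" .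
  have "inR0 (\<Sum>i<N. \<Sum>j\<in>{..<N} - {i}. of_int (b i * b j) * (z ^ i * cnj z ^ j))"
    by (intro inR0_sum offdiag) auto
  then obtain c where c: "(\<Sum>i<N. \<Sum>j\<in>{..<N} - {i}. of_int (b i * b j) * (z ^ i * cnj z ^ j)) = (\<Sum>d\<in>{1..<N}. of_int (c d) * z ^ d)"
    unfolding inR0_def by blast
  define a where "a = (\<lambda>d. if d = 0 then (\<Sum>i<N. (b i)^2) - 1 else c d)"
  have split: "{..<N} = insert 0 {1..<N}" using N_ge2 by auto
  have "S a = of_int (a 0) + (\<Sum>d\<in>{1..<N}. of_int (a d) * z ^ d)"
    unfolding S_def split by simp
  also have "\<dots> = y * cnj y - 1" unfolding eq c a_def by simp
  also have "\<dots> = S (\<lambda>_. 0)" using assms(2) by (simp add: S_def)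
  finally have "a 0 = 0" using uniq[of a "\<lambda>_. 0" 0] N_ge2 by simp
  thus ?thesis unfolding a_def by simp
qed

lemma sumsq1: assumes "(\<Sum>j<(n::nat). (b j)^2) = (1::int)"
  shows "\<exists>r<n. (b r = 1 \<or> b r = -1) \<and> (\<forall>j<n. j \<noteq> r \<longrightarrow> b j = 0)"
proof -
  obtain r where r: "r < n" "b r \<noteq> 0"
    using assms by (metis (no_types, lifting) lessThan_iff sum.neutral zero_neq_one power_zero_numeral)
  have "(\<Sum>j<n. (b j)^2) = (b r)^2 + (\<Sum>j\<in>{..<n}-{r}. (b j)^2)" using r by (simp add: sum.remove)
  moreover have "(b r)^2 \<ge> 1" using r(2) by (metis abs_le_square_iff abs_square_le_1 linorder_not_le not_one_le_zero power2_less_eq_zero_iff abs_ge_zero le_less zero_less_abs_iff int_one_le_iff_zero_less)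
  moreover have "(\<Sum>j\<in>{..<n}-{r}. (b j)^2) \<ge> 0" by (simp add: sum_nonneg)
  ultimately have h1: "(b r)^2 = 1" and h2: "(\<Sum>j\<in>{..<n}-{r}. (b j)^2) = 0" using assms by linarith+
  have "\<forall>j\<in>{..<n}-{r}. (b j)^2 = 0" using h2 by (subst (asm) sum_nonneg_eq_0_iff) auto
  hence "\<forall>j<n. j \<noteq> r \<longrightarrow> b j = 0" by simp
  moreover have "b r = 1 \<or> b r = -1" using h1 by (metis power2_eq_1_iff)
  ultimately show ?thesis using r by blast
qed

theorem key:
  assumes "norm (S a) = 2 ^ m"
  shows "\<exists>r<N. (a r = 2 ^ m \<or> a r = - (2 ^ m)) \<and> (\<forall>j<N. j \<noteq> r \<longrightarrow> a j = 0)"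
proof -
  have "S a * cnj (S a) = of_real ((norm (S a))^2)" by (rule complex_norm_square[symmetric])
  also have "\<dots> = 4 ^ m" using assms by (simp add: power_even_eq[symmetric] power_mult)
  finally have "S a * cnj (S a) = 4 ^ m" .
  then obtain y where y: "inR y" "S a = 2 ^ m * y" "y * cnj y = 1" using descent[of "S a" m] inR_def by blast
  obtain b where b: "y = S b" using y(1) inR_def by blast
  have ab: "a j = 2 ^ m * b j" if "j < N" for j
  proof -
    have "S a = S (\<lambda>j. 2 ^ m * b j)" using y(2) b S_scale[of "2^m" b] by simp
    thus ?thesis using uniq that by blast
  qed
  obtain r where r: "r < N" "b r = 1 \<or> b r = -1" "\<forall>j<N. j \<noteq> r \<longrightarrow> b j = 0"
    using sumsq1[OF parseval1[OF b y(3)]] by blast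
  show ?thesis using r ab by (intro exI[of _ r]) auto
qed

lemma key_conv:
  assumes "r < N" "a r = 2 ^ m \<or> a r = - (2 ^ m)" "\<forall>j<N. j \<noteq> r \<longrightarrow> a j = 0"
  shows "norm (S a) = 2 ^ m"
proof -
  have "S a = S (\<lambda>i. if i = r then a r else 0)" unfolding S_def
    by (rule sum.cong) (use assms(3) in auto)
  also have "\<dots> = of_int (a r) * z ^ r" using S_delta assms(1) by blast
  finally have "norm (S a) = \<bar>a r\<bar>" by (simp add: norm_mult norm_power norm_z)
  thus ?thesis using assms(2) by auto
qed
end



lemma sum_split_add: "(\<Sum>j<(A::nat) + B. F j) = (\<Sum>j<A. F j) + (\<Sum>j<B. F (A + j))"
  by (induction B) (simp_all add: add.assoc)

lemma finite_bvecs: "finite (bvecs n)"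
proof -
  have "bvecs n \<subseteq> (\<lambda>S i. i \<in> S) ` Pow {..<n}"
  proof
    fix x assume "x \<in> bvecs n"
    hence "x = (\<lambda>i. i \<in> {i. x i})" "{i. x i} \<in> Pow {..<n}"
      unfolding bvecs_def by (auto simp: not_le[symmetric])
    thus "x \<in> (\<lambda>S i. i \<in> S) ` Pow {..<n}" by blast
  qed
  thus ?thesis by (rule finite_subset) simp
qed

lemma zeta_add: "zeta q (a + b) = zeta q a * zeta q b"
  unfolding zeta_def by (simp add: cis_mult add_divide_distrib distrib_left)

lemma zeta_pow: "zeta q (c * int d) = zeta q c ^ d"
  unfolding zeta_def Complex.DeMoivre by (rule arg_cong[where f=cis], simp add: field_simps)

context cyc begin

lemma zeta_eq: "zeta (2 * N) a = z ^ nat (a mod int (2 * N))"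
proof -
  define r where "r = a mod int (2*N)"
  define t where "t = a div int (2*N)"
  have r0: "r \<ge> 0" unfolding r_def using N_ge2 by simp
  have a: "a = int (2*N) * t + r" unfolding r_def t_def by simp
  have "zeta (2*N) a = cis (2 * pi * real_of_int t + real_of_int r * (pi / real N))"
    unfolding zeta_def using N_ge2 by (subst a) (rule arg_cong[where f=cis], simp add: field_simps)
  also have "\<dots> = cis (2 * pi * real_of_int t) * cis (real_of_int r * (pi / real N))"
    by (rule cis_mult[symmetric])
  also have "cis (2 * pi * real_of_int t) = 1" by simp
  also have "real_of_int r = real (nat r)" using r0 by simp
  also have "cis (real (nat r) * (pi / real N)) = z ^ nat r" unfolding z_def Complex.DeMoivre by (rule arg_cong[where f=cis]) simp
  finally show ?thesis unfolding r_def by simp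
qed

lemma zeta_N: "zeta (2 * N) (int N) = -1"
  unfolding zeta_def using N_ge2 by simp

lemma gwht_S:
  assumes k: "k = e + 1"
  shows "gwht (2^k) n f u = S (\<lambda>j. bcount k n f u (int j) - bcount k n f u (int N + int j))"
proof -
  have qN: "(2::nat)^k = 2 * N" unfolding N_def k by simp
  have qNi: "(2::int)^k = int (2 * N)" using qN by (metis of_nat_numeral of_nat_power)
  have Ni: "(2::int)^(k-1) = int N" unfolding N_def k by simp
  define B where "B = bvecs n"
  define g where "g x = fshift k n f u x" for x
  have g_eq: "g x = (f x + int N * int (dotp n u x)) mod int (2 * N)" for x
    unfolding g_def fshift_def qNi Ni by simp
  have g0: "g x \<ge> 0" for x unfolding g_eq using N_ge2 by simp
  have g_range: "nat (g x) < 2 * N" for x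
    unfolding g_eq using N_ge2 by (simp add: nat_less_iff)
  have trm: "zeta (2^k) (f x) * (-1) ^ dotp n u x = z ^ nat (g x)" for x
  proof -
    have "zeta (2^k) (f x) * (-1) ^ dotp n u x = zeta (2*N) (f x) * zeta (2*N) (int N) ^ dotp n u x"
      using qN zeta_N by simp
    also have "\<dots> = zeta (2*N) (f x + int N * int (dotp n u x))" by (simp add: zeta_add zeta_pow)
    also have "\<dots> = z ^ nat (g x)" unfolding g_eq zeta_eq ..
    finally show ?thesis .
  qed
  have "gwht (2^k) n f u = (\<Sum>x\<in>B. z ^ nat (g x))" unfolding gwht_def B_def using trm by simp
  also have "\<dots> = (\<Sum>y\<in>{..<2*N}. \<Sum>x\<in>{x\<in>B. nat (g x) = y}. z ^ nat (g x))"
    by (rule sum.group[symmetric]) (use finite_bvecs g_range in \<open>auto simp: B_def\<close>)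
  also have "\<dots> = (\<Sum>y<2*N. of_int (bcount k n f u (int y)) * z ^ y)"
  proof (rule sum.cong[OF refl])
    fix y
    have "{x\<in>B. nat (g x) = y} = {x \<in> bvecs n. fshift k n f u x = int y}"
      unfolding B_def g_def using g0 unfolding g_def by (metis (mono_tags, lifting) nat_eq_iff)
    hence "(\<Sum>x\<in>{x\<in>B. nat (g x) = y}. z ^ nat (g x)) = (\<Sum>x\<in>{x \<in> bvecs n. fshift k n f u x = int y}. z ^ y)"
      unfolding g_def by (intro sum.cong) auto
    thus "(\<Sum>x\<in>{x\<in>B. nat (g x) = y}. z ^ nat (g x)) = of_int (bcount k n f u (int y)) * z ^ y"
      unfolding bcount_def by simp
  qed
  also have "\<dots> = (\<Sum>y<N. of_int (bcount k n f u (int y)) * z ^ y) + (\<Sum>y<N. of_int (bcount k n f u (int (N + y))) * z ^ (N + y))"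
    unfolding mult_2 by (rule sum_split_add)
  also have "\<dots> = S (\<lambda>j. bcount k n f u (int j) - bcount k n f u (int N + int j))"
    unfolding S_def by (simp add: power_add zN sum_subtractf algebra_simps sum_negf)
  finally show ?thesis .
qed

lemma cond_equiv:
  fixes b :: "int \<Rightarrow> int" and m :: nat
  shows "(\<exists>\<rho>::int. 0 \<le> \<rho> \<and> \<rho> \<le> int N - 1 \<and>
       (b (int N + \<rho>) = b \<rho> + 2 ^ m \<or> b (int N + \<rho>) = b \<rho> - 2 ^ m) \<and>
       (\<forall>j::int. 0 \<le> j \<and> j \<le> int N - 1 \<and> j \<noteq> \<rho> \<longrightarrow> b (int N + j) = b j))
    \<longleftrightarrow> norm (S (\<lambda>j. b (int j) - b (int N + int j))) = 2 ^ m" (is "?L \<longleftrightarrow> ?R")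
proof
  assume ?L
  then obtain \<rho> where r: "0 \<le> \<rho>" "\<rho> \<le> int N - 1"
    "b (int N + \<rho>) = b \<rho> + 2 ^ m \<or> b (int N + \<rho>) = b \<rho> - 2 ^ m"
    "\<forall>j::int. 0 \<le> j \<and> j \<le> int N - 1 \<and> j \<noteq> \<rho> \<longrightarrow> b (int N + j) = b j" by blast
  show ?R
  proof (rule key_conv[of "nat \<rho>"])
    show "nat \<rho> < N" using r by linarith
    show "(\<lambda>j. b (int j) - b (int N + int j)) (nat \<rho>) = 2 ^ m \<or> (\<lambda>j. b (int j) - b (int N + int j)) (nat \<rho>) = - (2 ^ m)"
      using r by auto
    show "\<forall>j<N. j \<noteq> nat \<rho> \<longrightarrow> (\<lambda>j. b (int j) - b (int N + int j)) j = 0"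
      using r(1,4) by (auto simp: nat_eq_iff)
  qed
next
  assume ?R
  then obtain r where r: "r < N" "b (int r) - b (int N + int r) = 2 ^ m \<or> b (int r) - b (int N + int r) = - (2 ^ m)"
    "\<forall>j<N. j \<noteq> r \<longrightarrow> b (int j) - b (int N + int j) = 0"
    using key[of "\<lambda>j. b (int j) - b (int N + int j)" m] by auto
  show ?L
  proof (intro exI[of _ "int r"] conjI allI impI)
    show "0 \<le> int r" by simp
    show "int r \<le> int N - 1" using r by simp
    show "b (int N + int r) = b (int r) + 2 ^ m \<or> b (int N + int r) = b (int r) - 2 ^ m" using r(2) by auto
    fix j :: int assume j: "0 \<le> j \<and> j \<le> int N - 1 \<and> j \<noteq> int r"
    hence "nat j < N" "nat j \<noteq> r" by auto
    hence "b (int (nat j)) - b (int N + int (nat j)) = 0" using r(3) by blast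
    thus "b (int N + j) = b j" using j by simp
  qed
qed

end

theorem mainTheorem3:
  fixes k m n :: nat and f :: "(nat \<Rightarrow> bool) \<Rightarrow> int"
  assumes "k > 1" and "n = 2 * m"
  shows "gbent (2 ^ k) n f \<longleftrightarrow>
    (\<forall>u\<in>bvecs n. \<exists>\<rho>::int. 0 \<le> \<rho> \<and> \<rho> \<le> 2 ^ (k - 1) - 1 \<and>
       (bcount k n f u (2 ^ (k - 1) + \<rho>) = bcount k n f u \<rho> + 2 ^ m \<or>
        bcount k n f u (2 ^ (k - 1) + \<rho>) = bcount k n f u \<rho> - 2 ^ m) \<and>
       (\<forall>j::int. 0 \<le> j \<and> j \<le> 2 ^ (k - 1) - 1 \<and> j \<noteq> \<rho> \<longrightarrow>
          bcount k n f u (2 ^ (k - 1) + j) = bcount k n f u j))"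
proof -
  interpret c: cyc "k - 1" using assms(1) by unfold_locales simp
  have Ni: "(2::int) ^ (k - 1) = int c.N" unfolding c.N_def by simp
  have k: "k = (k - 1) + 1" using assms(1) by simp
  have "(2::real) ^ n = (2 ^ m) ^ 2" unfolding assms(2) by (simp add: power_mult[symmetric] mult.commute)
  hence sq: "sqrt (2 ^ n) = (2::real) ^ m" by simp
  show ?thesis
    unfolding gbent_def Ni c.cond_equiv c.gwht_S[OF k] sq ..
qed


end
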